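(* Assume $m=n$. Let $\mathbf g=(g_1,\dots,g_n)\in\mathbb F_{q^m}^n$ have $\mathbb F_q$-linearly independent coordinates, let $1\le k\le n$, and let $V\subseteq\mathbb F_{q^m}$ be an $\mathbb F_q$-subspace of dimension $s$ with $0<s<m$. Then there exists $Q\in\mathcal L_{q^m}$ of $q$-degree $m-s$ such that $$\mathcal G(\mathbf g,k)\cap V^n=\Bigl\{\bigl((Q\circ A)(g_1),\dots,(Q\circ A)(g_n)\bigr)\;:\;A\in\mathcal L_{q^m},\ \deg_q(A)<k-(m-s)\Bigr\}.$$
   Context: A $q$-polynomial over $\mathbb F_{q^m}$ is $P(x)=\sum_{i=0}^d a_ix^{q^i}$, $a_i\in\mathbb F_{q^m}$; its $q$-degree is the largest $i$ with $a_i\ne0$ ($-\infty$ for $P=0$). $\mathcal L_{q^m}$ is the ring of $q$-polynomials under addition and composition $\circ$. The Gabidulin code is $\mathcal G(\mathbf g,k)=\{(F(g_1),\dots,F(g_n)):F\in\mathcal L_{q^m},\ \deg_qF<k\}$ (equivalently generated by the rows of $(g_j^{q^i})_{0\le i<k,\,1\le j\le n}$). $V^n=V\times\cdots\times V$ ($n$ times). *)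

theory Defs
  imports "HOL-Computational_Algebra.Polynomial"
begin

text \<open>The ambient field F_{q^m} is a finite field type 'a with CARD('a) = q^m;
  its subfield F_q is the fixed field of the Frobenius x \<mapsto> x^q.\<close>

definition Fq :: "nat \<Rightarrow> 'a::field set" where
  "Fq q = {x. x ^ q = x}"

definition is_qpoly :: "nat \<Rightarrow> 'a::field poly \<Rightarrow> bool" where
  "is_qpoly q P \<longleftrightarrow> (\<forall>i. coeff P i \<noteq> 0 \<longrightarrow> (\<exists>j. i = q ^ j))"

text \<open>q-degree of a nonzero q-polynomial (degree P = q^(qdeg q P)).
  The zero polynomial (q-degree -infinity) is treated separately in statements.\<close>
definition qdeg :: "nat \<Rightarrow> 'a::field poly \<Rightarrow> nat" where
  "qdeg q P = (LEAST j. degree P = q ^ j)"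

definition Fq_lin_indep :: "nat \<Rightarrow> nat \<Rightarrow> (nat \<Rightarrow> 'a::field) \<Rightarrow> bool" where
  "Fq_lin_indep q n g \<longleftrightarrow>
     (\<forall>c. (\<forall>i<n. c i \<in> Fq q) \<and> (\<Sum>i<n. c i * g i) = 0 \<longrightarrow> (\<forall>i<n. c i = 0))"

definition Fq_span :: "nat \<Rightarrow> nat \<Rightarrow> (nat \<Rightarrow> 'a::field) \<Rightarrow> 'a set" where
  "Fq_span q s b = {x. \<exists>c. (\<forall>i<s. c i \<in> Fq q) \<and> x = (\<Sum>i<s. c i * b i)}"

definition Fq_subspace :: "nat \<Rightarrow> 'a::field set \<Rightarrow> bool" where
  "Fq_subspace q V \<longleftrightarrow> 0 \<in> V \<and> (\<forall>x\<in>V. \<forall>y\<in>V. x + y \<in> V)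
      \<and> (\<forall>c\<in>Fq q. \<forall>x\<in>V. c * x \<in> V)"

definition Fq_dim :: "nat \<Rightarrow> 'a::field set \<Rightarrow> nat \<Rightarrow> bool" where
  "Fq_dim q V s \<longleftrightarrow> (\<exists>b. Fq_lin_indep q s b \<and> Fq_span q s b = V)"

definition gabidulin :: "nat \<Rightarrow> nat \<Rightarrow> (nat \<Rightarrow> 'a::field) \<Rightarrow> nat \<Rightarrow> 'a list set" where
  "gabidulin q n g k = {map (\<lambda>j. poly F (g j)) [0..<n] | F.
       is_qpoly q F \<and> (F = 0 \<or> qdeg q F < k)}"

definition vpow :: "'a set \<Rightarrow> nat \<Rightarrow> 'a list set" where
  "vpow V n = {v. length v = n \<and> set v \<subseteq> V}"

end

theory Submission
  imports Defs "HOL-Algebra.Sylow" "HOL-Algebra.FiniteProduct" "HOL-Computational_Algebra.Primes"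
begin

lemma card_field_prime_dvd:
  fixes r :: nat
  assumes "prime r" "r dvd card (UNIV :: 'a::{finite,field} set)"
  shows "r = CHAR('a)"
proof (rule ccontr)
  assume ne: "r \<noteq> CHAR('a)"
  define G :: "'a monoid" where "G = \<lparr>carrier = (UNIV::'a set), monoid.mult = (+), one = 0\<rparr>"
  have grp: "group G"
    unfolding G_def
    apply (rule groupI)
    apply (auto simp: add.assoc)
    by (metis add.left_inverse)
  define a where "a = multiplicity r (card (UNIV::'a set))"
  define mm where "mm = card (UNIV::'a set) div r ^ a"
  have "r ^ a dvd card (UNIV::'a set)" unfolding a_def by (rule multiplicity_dvd)
  hence ord: "order G = r ^ a * mm" unfolding mm_def G_def order_def by simp
  obtain H where H: "subgroup H G" "card H = r ^ a"
    using sylow_thm[OF assms(1) grp ord] unfolding G_def by auto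
  have "a > 0" unfolding a_def using assms
    by (simp add: prime_multiplicity_gt_zero_iff)
  have powx: "x [^]\<^bsub>G\<lparr>carrier := H\<rparr>\<^esub> n = of_nat n * x" for x n
    by (induction n) (auto simp: G_def algebra_simps)
  interpret HG: group "G\<lparr>carrier := H\<rparr>" by (rule subgroup.subgroup_is_group[OF H(1) grp])
  have finH: "finite H" by simp
  have pc: "CHAR('a) > 0" by (simp add: finite_imp_CHAR_pos)
  have pp: "prime CHAR('a)" using pc prime_CHAR_semidom by blast
  have "\<not> CHAR('a) dvd r ^ a"
  proof
    assume "CHAR('a) dvd r ^ a"
    hence "CHAR('a) dvd r" using pp prime_dvd_power by blast
    thus False using ne pp assms(1) primes_dvd_imp_eq by blast
  qed
  hence nz: "of_nat (r ^ a) \<noteq> (0::'a)" using of_nat_eq_0_iff_char_dvd by blast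
  have "H \<subseteq> {0}"
  proof
    fix x assume x: "x \<in> H"
    interpret HC: comm_group "G\<lparr>carrier := H\<rparr>"
      by (rule HG.group_comm_groupI) (simp add: G_def add.commute)
    have "x [^]\<^bsub>G\<lparr>carrier := H\<rparr>\<^esub> order (G\<lparr>carrier := H\<rparr>) = \<one>\<^bsub>G\<lparr>carrier := H\<rparr>\<^esub>"
      unfolding order_def by (rule HC.power_order_eq_one) (use finH x in auto)
    moreover have o: "order (G\<lparr>carrier:=H\<rparr>) = r^a" using H(2) by (simp add: order_def)
    moreover have one: "\<one>\<^bsub>G\<lparr>carrier:=H\<rparr>\<^esub> = 0" by (simp add: G_def)
    ultimately have "of_nat (r ^ a) * x = 0" by (simp only: powx)
    thus "x \<in> {0}" using nz by (metis mult_eq_0_iff singletonI)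
  qed
  hence "card H \<le> card {0::'a}" by (intro card_mono) auto
  moreover have "r ^ a > 1" using \<open>a > 0\<close> prime_gt_1_nat[OF assms(1)] by (metis One_nat_def one_less_power)
  ultimately show False using H(2) by simp
qed

lemma nat_all_prime_factors_eq:
  fixes q p :: nat
  assumes "q > 0" "prime p" "\<And>r. prime r \<Longrightarrow> r dvd q \<Longrightarrow> r = p"
  shows "q = p ^ multiplicity p q"
proof (rule multiplicity_eq_nat)
  show "q > 0" by fact
  show "p ^ multiplicity p q > 0" using assms(2) prime_gt_0_nat by simp
  fix r :: nat assume r: "prime r"
  show "multiplicity r q = multiplicity r (p ^ multiplicity p q)"
  proof (cases "r = p")
    case True thus ?thesis using r by (simp add: prime_imp_prime_elem)
  next
    case False
    hence "\<not> r dvd q" using assms(3) r by blast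
    thus ?thesis using False r assms(2)
      by (simp add: not_dvd_imp_multiplicity_0 multiplicity_distinct_prime_power)
  qed
qed

lemma field_power_card_eq_same:
  fixes x :: "'a :: {finite,field}"
  shows "x ^ card (UNIV :: 'a set) = x"
proof (cases "x = 0")
  case False
  have "x * (\<Prod>y\<in>UNIV-{0}. x * y) = x * x ^ (card (UNIV :: 'a set) - 1) * \<Prod>(UNIV-{0})"
    by (simp add: prod.distrib mult_ac)
  also have "x * x ^ (card (UNIV :: 'a set) - 1) = x ^ Suc (card (UNIV :: 'a set) - 1)"
    by (subst power_Suc) auto
  also have "Suc (card (UNIV :: 'a set) - 1) = card (UNIV :: 'a set)"
    using finite_UNIV_card_ge_0[where ?'a = 'a] by simp
  also have "(\<Prod>y\<in>UNIV-{0}. x * y) = (\<Prod>y\<in>UNIV-{0}. y)"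
    by (rule prod.reindex_bij_witness[of _ "\<lambda>y. y / x" "\<lambda>y. x * y"]) (use False in auto)
  finally show ?thesis
    by simp
qed (use finite_UNIV_card_ge_0[where ?'a = 'a] in auto)

lemma pcompose_monom: "pcompose (monom a n) A = smult a (A ^ n)"
  by (induction n) (simp_all add: monom_0 monom_Suc pcompose_pCons)

locale qfield =
  fixes q m :: nat and ty :: "'a::{finite,field} itself"
  assumes card: "card (UNIV :: 'a set) = q ^ m" and m_pos: "m > 0"
begin

lemma card_ge2: "card (UNIV :: 'a set) \<ge> 2"
proof -
  have "card {0::'a, 1} \<le> card (UNIV :: 'a set)" by (intro card_mono) auto
  thus ?thesis by simp
qed

lemma q_ge2: "q \<ge> 2"
proof (rule ccontr)
  assume "\<not> q \<ge> 2"
  hence "q \<le> 1" by simp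
  hence "q ^ m \<le> 1 ^ m" by (intro power_mono) auto
  thus False using card card_ge2 by simp
qed

lemma q_pos: "q > 0" using q_ge2 by simp

lemma char_prime: "prime CHAR('a)"
proof -
  have "CHAR('a) > 0" by (rule finite_imp_CHAR_pos) simp
  thus ?thesis using prime_CHAR_semidom by blast
qed

lemma q_char: "q = CHAR('a) ^ multiplicity CHAR('a) q"
proof (rule nat_all_prime_factors_eq[OF q_pos char_prime])
  fix r assume r: "prime r" "r dvd q"
  hence "r dvd q ^ m" using m_pos by (meson dvd_power dvd_trans)
  thus "r = CHAR('a)" using card_field_prime_dvd[where 'a='a, OF r(1)] card by simp
qed

lemma frob_gen:
  fixes x y :: "'b::comm_semiring_1"
  assumes "CHAR('b) = CHAR('a)"
  shows "(x + y) ^ (q ^ j) = x ^ (q ^ j) + y ^ (q ^ j)"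
proof -
  have "q ^ j = CHAR('b) ^ (multiplicity CHAR('a) q * j)"
    using q_char assms by (metis power_mult)
  thus ?thesis using freshmans_dream' assms char_prime by metis
qed

lemma frob_sum_gen:
  fixes f :: "'c \<Rightarrow> 'b::comm_semiring_1"
  assumes "CHAR('b) = CHAR('a)"
  shows "(sum f A) ^ (q ^ j) = (\<Sum>i\<in>A. f i ^ (q ^ j))"
proof -
  have "q ^ j = CHAR('b) ^ (multiplicity CHAR('a) q * j)"
    using q_char assms by (metis power_mult)
  thus ?thesis using freshmans_dream_sum' assms char_prime by metis
qed

lemma frob_diff_gen:
  fixes x y :: "'b::comm_ring_1"
  assumes "CHAR('b) = CHAR('a)"
  shows "(x - y) ^ (q ^ j) = x ^ (q ^ j) - y ^ (q ^ j)"
  using frob_gen[OF assms, of "x - y" y j] by (simp add: algebra_simps)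

lemmas frob = frob_gen[where 'b='a, OF refl]
lemmas frob_poly = frob_gen[where 'b="'a poly", simplified]
lemmas frob_diff = frob_diff_gen[where 'b='a, OF refl]
lemmas frob_diff_poly = frob_diff_gen[where 'b="'a poly", simplified]
lemmas frob_sum = frob_sum_gen[where 'b='a, OF refl]
lemmas frob_sum_poly = frob_sum_gen[where 'b="'a poly", simplified]

lemma frob1: "(x + y) ^ q = x ^ q + y ^ q" for x y :: 'a
  using frob[of x y 1] by simp
lemma frob1_diff: "(x - y) ^ q = x ^ q - y ^ q" for x y :: 'a
  using frob_diff[of x y 1] by simp

lemma pow_qm: "x ^ (q ^ m) = (x::'a)"
  using field_power_card_eq_same[of x] card by simp

lemma Fq_pow: "(c::'a) \<in> Fq q \<Longrightarrow> c ^ (q ^ j) = c"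
proof (induction j)
  case (Suc j)
  have "c ^ (q ^ Suc j) = (c ^ q) ^ (q ^ j)" by (simp add: power_mult)
  thus ?case using Suc by (simp add: Fq_def)
qed simp

lemma Fq_0: "(0::'a) \<in> Fq q" using q_pos by (simp add: Fq_def)
lemma Fq_1: "(1::'a) \<in> Fq q" by (simp add: Fq_def)
lemma Fq_add: "(c::'a) \<in> Fq q \<Longrightarrow> d \<in> Fq q \<Longrightarrow> c + d \<in> Fq q"
  by (simp add: Fq_def frob1)
lemma Fq_diff: "(c::'a) \<in> Fq q \<Longrightarrow> d \<in> Fq q \<Longrightarrow> c - d \<in> Fq q"
  by (simp add: Fq_def frob1_diff)
lemma Fq_mult: "(c::'a) \<in> Fq q \<Longrightarrow> d \<in> Fq q \<Longrightarrow> c * d \<in> Fq q"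
  by (simp add: Fq_def power_mult_distrib)
lemma Fq_uminus: "(c::'a) \<in> Fq q \<Longrightarrow> - c \<in> Fq q"
  using Fq_diff[OF Fq_0, of c] by simp

end

context qfield
begin

lemma q_gt1: "q > 1" using q_ge2 by simp

lemma qpow_inj: "q ^ i = q ^ j \<longleftrightarrow> i = j"
  using q_gt1 by (simp add: power_inject_exp)

lemma qpow_less: "q ^ i < q ^ j \<longleftrightarrow> i < j"
  using q_gt1 by (simp add: power_strict_increasing_iff)

lemma qpow_le: "q ^ i \<le> q ^ j \<longleftrightarrow> i \<le> j"
  using q_gt1 by (simp add: power_increasing_iff)

definition qsum :: "(nat \<Rightarrow> 'a) \<Rightarrow> nat \<Rightarrow> 'a poly" where
  "qsum c N = (\<Sum>j<N. monom (c j) (q ^ j))"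

lemma coeff_qsum_pow: "coeff (qsum c N) (q ^ j) = (if j < N then c j else 0)"
proof -
  have "coeff (qsum c N) (q ^ j) = (\<Sum>i<N. if i = j then c i else 0)"
    unfolding qsum_def coeff_sum by (intro sum.cong) (auto simp: coeff_monom qpow_inj)
  thus ?thesis by simp
qed

lemma coeff_qsum_nonpow: "(\<And>j. i \<noteq> q ^ j) \<Longrightarrow> coeff (qsum c N) i = 0"
  unfolding qsum_def coeff_sum by (intro sum.neutral) (auto simp: coeff_monom)

lemma is_qpoly_qsum: "is_qpoly q (qsum c N)"
  unfolding is_qpoly_def using coeff_qsum_nonpow by blast

lemma poly_qsum: "poly (qsum c N) x = (\<Sum>j<N. c j * x ^ (q ^ j))"
  unfolding qsum_def by (simp add: poly_sum poly_monom)

lemma qpoly_expand: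
  assumes "is_qpoly q (P::'a poly)" "degree P < q ^ N"
  shows "P = qsum (\<lambda>j. coeff P (q ^ j)) N"
proof (rule poly_eqI)
  fix i
  show "coeff P i = coeff (qsum (\<lambda>j. coeff P (q ^ j)) N) i"
  proof (cases "\<exists>j. i = q ^ j")
    case True
    then obtain j where j: "i = q ^ j" by blast
    show ?thesis
    proof (cases "j < N")
      case True thus ?thesis using j by (simp add: coeff_qsum_pow)
    next
      case False
      hence "q ^ N \<le> q ^ j" by (simp add: qpow_le)
      hence "coeff P i = 0" using assms(2) j by (intro coeff_eq_0) simp
      thus ?thesis using j False by (simp add: coeff_qsum_pow)
    qed
  next
    case False
    hence "coeff P i = 0" using assms(1) unfolding is_qpoly_def by blast
    thus ?thesis using False coeff_qsum_nonpow by metis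
  qed
qed

lemma deg_lt_qpow: "n < q ^ n"
proof -
  have "n < 2 ^ n" by (rule less_exp)
  also have "\<dots> \<le> q ^ n" using q_ge2 by (intro power_mono) auto
  finally show ?thesis .
qed

definition qn :: "'a poly \<Rightarrow> nat" where "qn P = Suc (degree P)"

lemma qpoly_expand':
  assumes "is_qpoly q (P::'a poly)"
  shows "P = qsum (\<lambda>j. coeff P (q ^ j)) (qn P)"
  using qpoly_expand[OF assms] deg_lt_qpow[of "Suc (degree P)"] unfolding qn_def by simp

lemma is_qpoly_0: "is_qpoly q (0::'a poly)" by (simp add: is_qpoly_def)
lemma is_qpoly_add: "is_qpoly q (P::'a poly) \<Longrightarrow> is_qpoly q R \<Longrightarrow> is_qpoly q (P + R)"
  unfolding is_qpoly_def
proof (intro allI impI)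
  fix i assume a: "\<forall>i. coeff P i \<noteq> 0 \<longrightarrow> (\<exists>j. i = q ^ j)" "\<forall>i. coeff R i \<noteq> 0 \<longrightarrow> (\<exists>j. i = q ^ j)"
    "coeff (P + R) i \<noteq> 0"
  hence "coeff P i \<noteq> 0 \<or> coeff R i \<noteq> 0" by auto
  thus "\<exists>j. i = q ^ j" using a by blast
qed
lemma is_qpoly_diff: "is_qpoly q (P::'a poly) \<Longrightarrow> is_qpoly q R \<Longrightarrow> is_qpoly q (P - R)"
  unfolding is_qpoly_def
proof (intro allI impI)
  fix i assume a: "\<forall>i. coeff P i \<noteq> 0 \<longrightarrow> (\<exists>j. i = q ^ j)" "\<forall>i. coeff R i \<noteq> 0 \<longrightarrow> (\<exists>j. i = q ^ j)"
    "coeff (P - R) i \<noteq> 0"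
  hence "coeff P i \<noteq> 0 \<or> coeff R i \<noteq> 0" by auto
  thus "\<exists>j. i = q ^ j" using a by blast
qed
lemma is_qpoly_smult: "is_qpoly q (P::'a poly) \<Longrightarrow> is_qpoly q (smult a P)"
  unfolding is_qpoly_def by fastforce
lemma is_qpoly_monom: "is_qpoly q (monom (a::'a) (q ^ j))"
  unfolding is_qpoly_def by (auto simp: coeff_monom)
lemma is_qpoly_sum: "(\<And>i. i \<in> A \<Longrightarrow> is_qpoly q (f i :: 'a poly)) \<Longrightarrow> is_qpoly q (sum f A)"
  by (induction A rule: infinite_finite_induct) (auto simp: is_qpoly_0 is_qpoly_add)

lemma qpoly_coeff0: "is_qpoly q (P::'a poly) \<Longrightarrow> coeff P 0 = 0"
  unfolding is_qpoly_def using q_pos by (metis less_numeral_extra(3) power_eq_0_iff)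

lemma qpoly_poly0: "is_qpoly q (P::'a poly) \<Longrightarrow> poly P 0 = 0"
  by (simp add: poly_0_coeff_0 qpoly_coeff0)

lemma qpoly_degree_pos: "is_qpoly q (P::'a poly) \<Longrightarrow> P \<noteq> 0 \<Longrightarrow> degree P > 0"
  by (metis qpoly_coeff0 degree_0_id pCons_0_0 neq0_conv)

lemma qpoly_degree: "is_qpoly q (P::'a poly) \<Longrightarrow> P \<noteq> 0 \<Longrightarrow> degree P = q ^ qdeg q P"
proof -
  assume a: "is_qpoly q P" "P \<noteq> 0"
  hence "\<exists>j. degree P = q ^ j" using a unfolding is_qpoly_def by simp
  thus ?thesis unfolding qdeg_def by (rule LeastI_ex)
qed

lemma qdeg_eq: "degree (P::'a poly) = q ^ j \<Longrightarrow> qdeg q P = j"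
  unfolding qdeg_def by (rule Least_equality) (auto simp: qpow_inj)

lemma poly_qpoly_expand: "is_qpoly q (P::'a poly) \<Longrightarrow>
    poly P x = (\<Sum>j<qn P. coeff P (q ^ j) * x ^ (q ^ j))"
  by (subst qpoly_expand') (simp_all add: poly_qsum)

lemma qpoly_add: "is_qpoly q (P::'a poly) \<Longrightarrow> poly P (x + y) = poly P x + poly P y"
  by (simp add: poly_qpoly_expand frob distrib_left sum.distrib)

lemma qpoly_diff: "is_qpoly q (P::'a poly) \<Longrightarrow> poly P (x - y) = poly P x - poly P y"
  using qpoly_add[of P "x - y" y] by simp

lemma qpoly_Fq_mult: "is_qpoly q (P::'a poly) \<Longrightarrow> c \<in> Fq q \<Longrightarrow> poly P (c * x) = c * poly P x"
  by (simp add: poly_qpoly_expand power_mult_distrib Fq_pow sum_distrib_left mult_ac)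

lemma qpoly_sum_arg: "is_qpoly q (P::'a poly) \<Longrightarrow> poly P (sum f A) = (\<Sum>i\<in>A. poly P (f i))"
  by (induction A rule: infinite_finite_induct) (simp_all add: qpoly_poly0 qpoly_add)

lemma qpoly_power:
  assumes "is_qpoly q (A::'a poly)"
  shows "A ^ (q ^ j) = (\<Sum>i<qn A. monom (coeff A (q ^ i) ^ (q ^ j)) (q ^ (i + j)))"
proof -
  have "A ^ (q ^ j) = (qsum (\<lambda>i. coeff A (q ^ i)) (qn A)) ^ (q ^ j)"
    using qpoly_expand'[OF assms] by simp
  also have "\<dots> = (\<Sum>i<qn A. monom (coeff A (q ^ i)) (q ^ i) ^ (q ^ j))"
    unfolding qsum_def by (rule frob_sum_poly)
  finally show ?thesis by (simp add: monom_power power_add)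
qed

lemma is_qpoly_power: "is_qpoly q (A::'a poly) \<Longrightarrow> is_qpoly q (A ^ (q ^ j))"
  by (subst qpoly_power) (auto intro!: is_qpoly_sum is_qpoly_monom)

lemma pcompose_qpoly_expand: "is_qpoly q (P::'a poly) \<Longrightarrow>
   pcompose P A = (\<Sum>j<qn P. smult (coeff P (q ^ j)) (A ^ (q ^ j)))"
  by (subst qpoly_expand') (simp_all add: qsum_def pcompose_sum pcompose_monom)

lemma is_qpoly_pcompose: "is_qpoly q (P::'a poly) \<Longrightarrow> is_qpoly q A \<Longrightarrow> is_qpoly q (pcompose P A)"
  by (simp add: pcompose_qpoly_expand is_qpoly_sum is_qpoly_smult is_qpoly_power)

lemma pcompose_add_right: "is_qpoly q (P::'a poly) \<Longrightarrow>
    pcompose P (A + B) = pcompose P A + pcompose P B"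
  by (simp add: pcompose_qpoly_expand frob_poly smult_add_right sum.distrib)

lemma pcompose_diff_right: "is_qpoly q (P::'a poly) \<Longrightarrow>
    pcompose P (A - B) = pcompose P A - pcompose P B"
  using pcompose_add_right[of P "A - B" B] by simp

lemma qpoly_left_zero:
  assumes "is_qpoly q (Q::'a poly)" "Q \<noteq> 0" "is_qpoly q D" "pcompose Q D = 0"
  shows "D = 0"
proof -
  have "degree Q * degree D = 0" using assms(4) by (metis degree_pcompose degree_0)
  hence "degree D = 0" using qpoly_degree_pos[OF assms(1,2)] by simp
  thus ?thesis using assms(3) qpoly_degree_pos by (metis less_irrefl)
qed

lemma qdeg_pcompose:
  assumes "is_qpoly q (Q::'a poly)" "Q \<noteq> 0" "is_qpoly q A" "A \<noteq> 0"
  shows "pcompose Q A \<noteq> 0" "qdeg q (pcompose Q A) = qdeg q Q + qdeg q A"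
proof -
  show nz: "pcompose Q A \<noteq> 0" using qpoly_left_zero assms by blast
  have "degree (pcompose Q A) = q ^ (qdeg q Q + qdeg q A)"
    by (simp add: degree_pcompose qpoly_degree[OF assms(1,2)] qpoly_degree[OF assms(3,4)] power_add)
  thus "qdeg q (pcompose Q A) = qdeg q Q + qdeg q A" by (rule qdeg_eq)
qed

end

context qfield
begin

definition Xm :: "'a poly" where "Xm = monom 1 (q ^ m) - monom 1 1"

lemma is_qpoly_Xm: "is_qpoly q Xm"
  unfolding Xm_def using is_qpoly_monom[of 1 m] is_qpoly_monom[of 1 0]
  by (intro is_qpoly_diff) simp_all

lemma poly_Xm: "poly Xm x = 0"
  by (simp add: Xm_def poly_monom pow_qm)

lemma degree_Xm: "degree Xm = q ^ m"
proof -
  have "q ^ m > 1" using q_gt1 m_pos by (metis one_less_power)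
  have "Xm = monom 1 (q ^ m) + (- monom 1 1)" unfolding Xm_def by simp
  also have "degree \<dots> = degree (monom (1::'a) (q ^ m))"
    by (rule degree_add_eq_left) (use \<open>q ^ m > 1\<close> in \<open>simp add: degree_monom_eq\<close>)
  finally show ?thesis by (simp add: degree_monom_eq)
qed

lemma Xm_nz: "Xm \<noteq> 0"
  using degree_Xm q_pos by (metis degree_0 power_not_zero less_numeral_extra(3))

lemma Xm_central:
  assumes A: "is_qpoly q A"
  shows "pcompose Xm A = pcompose A Xm"
proof -
  have "pcompose Xm A = A ^ (q ^ m) - A"
    by (simp add: Xm_def pcompose_diff pcompose_monom)
  also have "A ^ (q ^ m) = (\<Sum>i<qn A. monom (coeff A (q ^ i)) (q ^ (i + m)))"
    by (simp add: qpoly_power[OF A] pow_qm)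
  finally have L: "pcompose Xm A = (\<Sum>i<qn A. monom (coeff A (q ^ i)) (q ^ (i + m))) - A" .
  have "pcompose A Xm = (\<Sum>j<qn A. smult (coeff A (q ^ j)) (Xm ^ (q ^ j)))"
    by (rule pcompose_qpoly_expand[OF A])
  also have "\<dots> = (\<Sum>j<qn A. monom (coeff A (q ^ j)) (q ^ (j + m)) - monom (coeff A (q ^ j)) (q ^ j))"
    by (intro sum.cong refl)
       (simp add: Xm_def frob_diff_poly monom_power smult_monom power_add mult_ac smult_diff_right)
  also have "\<dots> = (\<Sum>i<qn A. monom (coeff A (q ^ i)) (q ^ (i + m))) - qsum (\<lambda>j. coeff A (q ^ j)) (qn A)"
    by (simp add: sum_subtractf qsum_def)
  also have "qsum (\<lambda>j. coeff A (q ^ j)) (qn A) = A" using qpoly_expand'[OF A] by simp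
  finally show ?thesis using L by simp
qed

lemma poly_many_roots_zero:
  fixes P :: "'a poly"
  assumes "degree P < card S" "\<And>x. x \<in> S \<Longrightarrow> poly P x = 0"
  shows "P = 0"
proof (rule ccontr)
  assume nz: "P \<noteq> 0"
  have "S \<subseteq> {x. poly P x = 0}" using assms(2) by blast
  hence "card S \<le> card {x. poly P x = 0}" by (intro card_mono) simp_all
  also have "\<dots> \<le> degree P" by (rule card_poly_roots_bound[OF nz])
  finally show False using assms(1) by simp
qed

lemma qpoly_rdiv:
  fixes P D :: "'a poly"
  assumes "is_qpoly q P" "is_qpoly q D" "D \<noteq> 0"
  shows "\<exists>B R. is_qpoly q B \<and> is_qpoly q R \<and> P = pcompose B D + R \<and> (R = 0 \<or> degree R < degree D)"
  using assms(1)
proof (induction "degree P" arbitrary: P rule: less_induct)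
  case (less P)
  show ?case
  proof (cases "P = 0 \<or> degree P < degree D")
    case True
    thus ?thesis using less.prems by (intro exI[of _ 0] exI[of _ P]) (auto simp: is_qpoly_0)
  next
    case False
    hence Pnz: "P \<noteq> 0" and le: "degree D \<le> degree P" by auto
    define j where "j = qdeg q P"
    define d where "d = qdeg q D"
    have dP: "degree P = q ^ j" unfolding j_def by (rule qpoly_degree[OF less.prems Pnz])
    have dD: "degree D = q ^ d" unfolding d_def by (rule qpoly_degree[OF assms(2,3)])
    have "d \<le> j" using le dP dD by (simp add: qpow_le)
    define e where "e = j - d"
    have je: "j = e + d" using \<open>d \<le> j\<close> unfolding e_def by simp
    define c where "c = lead_coeff D"
    define a where "a = lead_coeff P"
    have cnz: "c \<noteq> 0" using assms(3) unfolding c_def by simp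
    define T where "T = monom (a / c ^ (q ^ e)) (q ^ e)"
    have Tq: "is_qpoly q T" unfolding T_def by (rule is_qpoly_monom)
    have TD: "pcompose T D = smult (a / c ^ (q ^ e)) (D ^ (q ^ e))"
      unfolding T_def by (rule pcompose_monom)
    have anz: "a \<noteq> 0" using Pnz unfolding a_def by simp
    have degTD: "degree (pcompose T D) = degree P"
      using anz cnz assms(3) by (simp add: TD degree_power_eq dD dP je power_add mult.commute)
    have lcTD: "coeff (pcompose T D) (degree P) = a"
    proof -
      have "coeff (pcompose T D) (degree P) = lead_coeff (pcompose T D)" using degTD by simp
      also have "\<dots> = a / c ^ (q ^ e) * c ^ (q ^ e)" using assms(3) by (simp add: TD lead_coeff_power c_def)
      also have "\<dots> = a" using cnz by simp
      finally show ?thesis .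
    qed
    define P' where "P' = P - pcompose T D"
    have P'q: "is_qpoly q P'" unfolding P'_def
      by (intro is_qpoly_diff less.prems is_qpoly_pcompose Tq assms(2))
    have c0: "coeff P' (degree P) = 0" unfolding P'_def using lcTD by (simp add: a_def)
    have dle: "degree P' \<le> degree P" unfolding P'_def
      using degree_diff_le[of P "degree P" "pcompose T D"] degTD by simp
    have "degree P' < degree P"
    proof (rule ccontr)
      assume "\<not> degree P' < degree P"
      hence "degree P' = degree P" using dle by simp
      hence "P' = 0" using c0 by (metis leading_coeff_0_iff)
      hence "degree P' = 0" by simp
      moreover have "degree P > 0" using qpoly_degree_pos[OF less.prems Pnz] .
      ultimately show False using \<open>degree P' = degree P\<close> by simp
    qed
    from less.hyps[OF this P'q] obtain B R where BR: "is_qpoly q B" "is_qpoly q R"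
      "P' = pcompose B D + R" "R = 0 \<or> degree R < degree D" by blast
    have "P = pcompose (B + T) D + R"
      using BR(3) unfolding P'_def by (simp add: pcompose_add algebra_simps)
    thus ?thesis using BR is_qpoly_add[OF BR(1) Tq] by blast
  qed
qed

end

context qfield
begin

lemma deg_binom: "N > 1 \<Longrightarrow> degree (monom (1::'a) N - monom c 1) = N"
proof -
  assume N: "N > 1"
  have "monom (1::'a) N - monom c 1 = monom 1 N + (- monom c 1)" by simp
  also have "degree \<dots> = degree (monom (1::'a) N)"
    by (rule degree_add_eq_left) (use N degree_monom_le[of c 1] in \<open>simp add: degree_monom_eq\<close>)
  finally show ?thesis by (simp add: degree_monom_eq)
qed

lemma card_Fq_le: "card (Fq q :: 'a set) \<le> q"
proof -
  define P where "P = monom (1::'a) q - monom 1 1"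
  have dP: "degree P = q" unfolding P_def using q_gt1 by (rule deg_binom)
  hence "P \<noteq> 0" using q_pos by auto
  have "Fq q = {x. poly P x = 0}" unfolding P_def Fq_def by (simp add: poly_monom)
  thus ?thesis using card_poly_roots_bound[OF \<open>P \<noteq> 0\<close>] dP by simp
qed

lemma card_Fq_ge: "q \<le> card (Fq q :: 'a set)"
proof -
  define T where "T = qsum (\<lambda>_. 1) m"
  define \<phi> where "\<phi> = (\<lambda>x::'a. x ^ q - x)"
  have Troot: "poly T (\<phi> x) = 0" for x
  proof -
    have "poly T (\<phi> x) = (\<Sum>i<m. (x ^ q - x) ^ (q ^ i))"
      unfolding T_def \<phi>_def by (simp add: poly_qsum)
    also have "\<dots> = (\<Sum>i<m. x ^ (q ^ Suc i) - x ^ (q ^ i))"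
      by (intro sum.cong refl) (simp add: frob_diff power_mult[symmetric])
    also have "\<dots> = x ^ (q ^ m) - x ^ (q ^ 0)" by (rule sum_lessThan_telescope)
    finally show ?thesis by (simp add: pow_qm)
  qed
  have Tnz: "T \<noteq> 0"
  proof
    assume "T = 0"
    hence "coeff T (q ^ (m - 1)) = 0" by simp
    thus False unfolding T_def using m_pos by (simp add: coeff_qsum_pow)
  qed
  have degT: "degree T \<le> q ^ (m - 1)"
  proof (rule degree_le, intro allI impI)
    fix i assume i: "q ^ (m - 1) < i"
    show "coeff T i = 0"
    proof (cases "\<exists>j. i = q ^ j")
      case True
      then obtain j where j: "i = q ^ j" by blast
      hence "m - 1 < j" using i by (simp add: qpow_less)
      thus ?thesis unfolding T_def j by (simp add: coeff_qsum_pow)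
    next
      case False thus ?thesis unfolding T_def by (metis coeff_qsum_nonpow)
    qed
  qed
  have "range \<phi> \<subseteq> {y. poly T y = 0}" using Troot by auto
  hence cr: "card (range \<phi>) \<le> q ^ (m - 1)"
    using card_mono[of "{y. poly T y = 0}" "range \<phi>"] card_poly_roots_bound[OF Tnz] degT
    by simp
  have fib: "card {x. \<phi> x = y} \<le> card (Fq q :: 'a set)" if yin: "y \<in> range \<phi>" for y
  proof -
    obtain x0 where x0: "y = \<phi> x0" using yin by blast
    have "inj_on (\<lambda>x. x - x0) {x. \<phi> x = y}" by (intro inj_onI) simp
    moreover have "(\<lambda>x. x - x0) ` {x. \<phi> x = y} \<subseteq> Fq q"
    proof
      fix z assume "z \<in> (\<lambda>x. x - x0) ` {x. \<phi> x = y}"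
      then obtain x where x: "\<phi> x = \<phi> x0" "z = x - x0" using x0 by blast
      have "z ^ q = x ^ q - x0 ^ q" using x(2) by (simp add: frob1_diff)
      also have "\<dots> = (x ^ q - x) - (x0 ^ q - x0) + (x - x0)" by (simp add: algebra_simps)
      also have "\<dots> = z" using x unfolding \<phi>_def by simp
      finally show "z \<in> Fq q" by (simp add: Fq_def)
    qed
    ultimately show ?thesis by (intro card_inj_on_le) auto
  qed
  have "UNIV = (\<Union>y\<in>range \<phi>. {x. \<phi> x = y})" by auto
  hence "q ^ m = card (\<Union>y\<in>range \<phi>. {x. \<phi> x = y})" using card by simp
  also have "\<dots> \<le> (\<Sum>y\<in>range \<phi>. card {x. \<phi> x = y})" by (rule card_UN_le) simp
  also have "\<dots> \<le> card (range \<phi>) * card (Fq q :: 'a set)"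
    using sum_bounded_above[of "range \<phi>" "\<lambda>y. card {x. \<phi> x = y}" "card (Fq q :: 'a set)"] fib
    by simp
  also have "\<dots> \<le> q ^ (m - 1) * card (Fq q :: 'a set)" by (rule mult_le_mono1[OF cr])
  finally have "q ^ m \<le> q ^ (m - 1) * card (Fq q :: 'a set)" .
  moreover have "q ^ m = q * q ^ (m - 1)" using m_pos by (cases m) simp_all
  ultimately have "q * q ^ (m - 1) \<le> card (Fq q :: 'a set) * q ^ (m - 1)" by (simp only: mult.commute)
  thus ?thesis using q_pos by (simp only: mult_le_cancel2) simp
qed

lemma card_Fq: "card (Fq q :: 'a set) = q"
  using card_Fq_le card_Fq_ge by simp

lemma span_image: "Fq_span q s (b :: nat \<Rightarrow> 'a) =
    (\<lambda>c. \<Sum>j<s. c j * b j) ` (PiE {..<s} (\<lambda>_. Fq q))"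
proof
  show "Fq_span q s b \<subseteq> (\<lambda>c. \<Sum>j<s. c j * b j) ` (PiE {..<s} (\<lambda>_. Fq q))"
  proof
    fix x assume "x \<in> Fq_span q s b"
    then obtain c where c: "\<forall>i<s. c i \<in> Fq q" "x = (\<Sum>i<s. c i * b i)" unfolding Fq_span_def by blast
    have "restrict c {..<s} \<in> PiE {..<s} (\<lambda>_. Fq q)" using c(1) by auto
    moreover have "x = (\<Sum>j<s. restrict c {..<s} j * b j)" using c(2) by simp
    ultimately show "x \<in> (\<lambda>c. \<Sum>j<s. c j * b j) ` (PiE {..<s} (\<lambda>_. Fq q))" by blast
  qed
  show "(\<lambda>c. \<Sum>j<s. c j * b j) ` (PiE {..<s} (\<lambda>_. Fq q)) \<subseteq> Fq_span q s b"
    unfolding Fq_span_def by (auto simp: PiE_def Pi_def)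
qed

lemma span_card:
  assumes "Fq_lin_indep q s (b :: nat \<Rightarrow> 'a)"
  shows "card (Fq_span q s b) = q ^ s"
proof -
  have "inj_on (\<lambda>c. \<Sum>j<s. c j * b j) (PiE {..<s} (\<lambda>_. Fq q))"
  proof (rule inj_onI)
    fix c d assume c: "c \<in> PiE {..<s} (\<lambda>_. Fq q)" and d: "d \<in> PiE {..<s} (\<lambda>_. Fq q)"
      and eq: "(\<Sum>j<s. c j * b j) = (\<Sum>j<s. d j * b j)"
    have H: "\<And>c. (\<forall>i<s. c i \<in> Fq q) \<Longrightarrow> (\<Sum>i<s. c i * b i) = 0 \<Longrightarrow> \<forall>i<s. c i = 0"
      using assms unfolding Fq_lin_indep_def by blast
    have "(\<Sum>j<s. (c j - d j) * b j) = 0" using eq by (simp add: left_diff_distrib sum_subtractf)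
    moreover have "\<forall>i<s. c i - d i \<in> Fq q" using c d by (auto intro!: Fq_diff)
    ultimately have z: "\<forall>i<s. c i - d i = 0" using H[of "\<lambda>j. c j - d j"] by blast
    show "c = d"
    proof (rule PiE_ext[OF c d])
      fix i assume "i \<in> {..<s}"
      thus "c i = d i" using z by simp
    qed
  qed
  hence "card (Fq_span q s b) = card (PiE {..<s} (\<lambda>_. Fq q :: 'a set))"
    unfolding span_image by (rule card_image)
  also have "\<dots> = q ^ s" by (simp add: card_PiE card_Fq)
  finally show ?thesis .
qed

lemma span_0: "Fq_span q 0 (b :: nat \<Rightarrow> 'a) = {0}"
  unfolding Fq_span_def by auto

lemma span_Suc: "x \<in> Fq_span q (Suc i) (b :: nat \<Rightarrow> 'a) \<longleftrightarrow>
    (\<exists>y c. y \<in> Fq_span q i b \<and> c \<in> Fq q \<and> x = y + c * b i)"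
proof
  assume "x \<in> Fq_span q (Suc i) b"
  then obtain c where c: "\<forall>j<Suc i. c j \<in> Fq q" "x = (\<Sum>j<Suc i. c j * b j)"
    unfolding Fq_span_def by blast
  have "(\<Sum>j<i. c j * b j) \<in> Fq_span q i b" unfolding Fq_span_def using c(1) by (auto intro!: exI[of _ c])
  moreover have "x = (\<Sum>j<i. c j * b j) + c i * b i" using c(2) by simp
  ultimately show "\<exists>y c. y \<in> Fq_span q i b \<and> c \<in> Fq q \<and> x = y + c * b i" using c(1) by blast
next
  assume "\<exists>y c. y \<in> Fq_span q i b \<and> c \<in> Fq q \<and> x = y + c * b i"
  then obtain y c where yc: "y \<in> Fq_span q i b" "c \<in> Fq q" "x = y + c * b i" by blast
  then obtain d where d: "\<forall>j<i. d j \<in> Fq q" "y = (\<Sum>j<i. d j * b j)" unfolding Fq_span_def by blast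
  define d' where "d' = d(i := c)"
  have s1: "(\<Sum>j<i. d' j * b j) = (\<Sum>j<i. d j * b j)"
    unfolding d'_def by (intro sum.cong) auto
  have "(\<Sum>j<Suc i. d' j * b j) = (\<Sum>j<i. d j * b j) + c * b i"
    using s1 by (simp add: d'_def)
  hence xs: "x = (\<Sum>j<Suc i. d' j * b j)" using yc(3) d(2) by simp
  have "\<forall>j<Suc i. d' j \<in> Fq q" unfolding d'_def using d(1) yc(2) by (simp add: less_Suc_eq)
  thus "x \<in> Fq_span q (Suc i) b" unfolding Fq_span_def using xs by blast
qed

primrec Lsub :: "(nat \<Rightarrow> 'a) \<Rightarrow> nat \<Rightarrow> 'a poly" where
  "Lsub b 0 = monom 1 1"
| "Lsub b (Suc i) = pcompose (monom 1 q - monom (poly (Lsub b i) (b i) ^ (q - 1)) 1) (Lsub b i)"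

lemma Lsub_qpoly: "is_qpoly q (Lsub b i)"
proof (induction i)
  case 0 show ?case using is_qpoly_monom[of 1 0] by simp
next
  case (Suc i)
  have "is_qpoly q (monom (1::'a) q - monom (poly (Lsub b i) (b i) ^ (q - 1)) 1)"
    using is_qpoly_monom[of 1 1] is_qpoly_monom[of "poly (Lsub b i) (b i) ^ (q - 1)" 0]
    by (intro is_qpoly_diff) simp_all
  thus ?case using Suc by (simp add: is_qpoly_pcompose)
qed

lemma Lsub_degree: "degree (Lsub b i) = q ^ i"
proof (induction i)
  case (Suc i)
  have "degree (monom (1::'a) q - monom (poly (Lsub b i) (b i) ^ (q - 1)) 1) = q"
    by (rule deg_binom[OF q_gt1])
  thus ?case using Suc by (simp add: degree_pcompose)
qed (simp add: degree_monom_eq)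

lemma poly_Lsub_Suc: "poly (Lsub b (Suc i)) x =
   poly (Lsub b i) x ^ q - poly (Lsub b i) (b i) ^ (q - 1) * poly (Lsub b i) x"
  by (simp add: poly_pcompose poly_monom)

lemma Lsub_roots: "poly (Lsub b i) x = 0 \<longleftrightarrow> x \<in> Fq_span q i b"
proof (induction i arbitrary: x)
  case 0 thus ?case by (simp add: span_0 poly_monom)
next
  case (Suc i)
  define L where "L = Lsub b i"
  define u where "u = poly L (b i)"
  have Lq: "is_qpoly q L" unfolding L_def by (rule Lsub_qpoly)
  have uq: "u ^ (q - 1) * u = u ^ q" using q_pos by (metis Suc_diff_1 power_Suc2)
  have PS: "poly (Lsub b (Suc i)) x = poly L x ^ q - u ^ (q - 1) * poly L x" for x
    unfolding L_def u_def by (rule poly_Lsub_Suc)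
  show ?case
  proof
    assume z: "poly (Lsub b (Suc i)) x = 0"
    define t where "t = poly L x"
    have tq: "t ^ q = u ^ (q - 1) * t" using z unfolding PS t_def by simp
    show "x \<in> Fq_span q (Suc i) b"
    proof (cases "t = 0")
      case True
      hence "x \<in> Fq_span q i b" using Suc.IH unfolding t_def L_def by blast
      thus ?thesis unfolding span_Suc using Fq_0 by force
    next
      case False
      have unz: "u \<noteq> 0"
      proof
        assume "u = 0"
        hence "t ^ q = 0" using tq q_ge2 by simp
        thus False using False by simp
      qed
      define lam where "lam = t / u"
      have "lam ^ q = t ^ q / u ^ q" unfolding lam_def by (simp add: power_divide)
      also have "\<dots> = lam" unfolding lam_def tq using unz by (simp flip: uq)
      finally have lam: "lam \<in> Fq q" by (simp add: Fq_def)
      have "poly L (x - lam * b i) = t - lam * u"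
        using Lq lam by (simp add: qpoly_diff qpoly_Fq_mult t_def u_def)
      also have "\<dots> = 0" unfolding lam_def using unz by simp
      finally have "x - lam * b i \<in> Fq_span q i b" using Suc.IH unfolding L_def by blast
      thus ?thesis unfolding span_Suc using lam by (intro exI[of _ "x - lam * b i"] exI[of _ lam]) auto
    qed
  next
    assume "x \<in> Fq_span q (Suc i) b"
    then obtain y c where yc: "y \<in> Fq_span q i b" "c \<in> Fq q" "x = y + c * b i"
      unfolding span_Suc by blast
    have "poly L y = 0" using Suc.IH yc(1) unfolding L_def by blast
    hence "poly L x = c * u" using Lq yc by (simp add: qpoly_add qpoly_Fq_mult u_def)
    hence "poly (Lsub b (Suc i)) x = c ^ q * u ^ q - u ^ (q - 1) * (c * u)"
      unfolding PS by (simp add: power_mult_distrib)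
    also have "\<dots> = 0" using yc(2) uq unfolding Fq_def by (simp add: algebra_simps)
    finally show "poly (Lsub b (Suc i)) x = 0" .
  qed
qed

end

lemma subspace_lincomb:
  fixes V :: "'a::field set" and n :: nat and c v :: "nat \<Rightarrow> 'a"
  assumes "Fq_subspace q V" "\<forall>j<n. c j \<in> Fq q \<and> v j \<in> V"
  shows "(\<Sum>j<n. c j * v j) \<in> V"
  using assms(2)
proof (induction n)
  case 0 thus ?case using assms(1) unfolding Fq_subspace_def by simp
next
  case (Suc n)
  have "(\<Sum>j<n. c j * v j) \<in> V" using Suc by simp
  moreover have "c n * v n \<in> V" using Suc.prems assms(1) unfolding Fq_subspace_def by simp
  ultimately show ?case using assms(1) unfolding Fq_subspace_def by simp
qed

theorem mainTheorem4:
  fixes q m n k s :: nat and g :: "nat \<Rightarrow> 'a::{finite,field}" and V :: "'a set"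
  assumes card: "card (UNIV :: 'a set) = q ^ m"
    and mn: "m = n"
    and indep: "Fq_lin_indep q n g"
    and k: "1 \<le> k" "k \<le> n"
    and sub: "Fq_subspace q V" and dim: "Fq_dim q V s"
    and s: "0 < s" "s < m"
  shows "\<exists>Q. is_qpoly q Q \<and> Q \<noteq> 0 \<and> qdeg q Q = m - s \<and>
     gabidulin q n g k \<inter> vpow V n =
       {map (\<lambda>j. poly Q (poly A (g j))) [0..<n] | A.
          is_qpoly q A \<and> (A = 0 \<or> int (qdeg q A) < int k - int (m - s))}"
proof -
  interpret qfield q m "TYPE('a)" using card s by unfold_locales simp_all
  obtain b where b: "Fq_lin_indep q s b" "Fq_span q s b = V" using dim unfolding Fq_dim_def by blast
  define L where "L = Lsub b s"
  have Lq: "is_qpoly q L" unfolding L_def by (rule Lsub_qpoly)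
  have degL: "degree L = q ^ s" unfolding L_def by (rule Lsub_degree)
  have Lroots: "poly L x = 0 \<longleftrightarrow> x \<in> V" for x unfolding L_def b(2)[symmetric] by (rule Lsub_roots)
  have Lnz: "L \<noteq> 0" using degL q_pos by (metis degree_0 power_not_zero less_numeral_extra(3))
  have degLpos: "degree L > 0" using degL q_pos by simp
  have cardV: "card V = q ^ s" using span_card[OF b(1)] b(2) by simp
  obtain B R where BR: "is_qpoly q B" "is_qpoly q R" "Xm = pcompose B L + R" "R = 0 \<or> degree R < degree L"
    using qpoly_rdiv[OF is_qpoly_Xm Lq Lnz] by blast
  have "R = 0"
  proof (cases "R = 0")
    case False
    hence dR: "degree R < card V" using BR(4) degL cardV by simp
    show ?thesis
    proof (rule poly_many_roots_zero[OF dR])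
      fix v assume "v \<in> V"
      hence "poly L v = 0" using Lroots by simp
      hence "poly (pcompose B L) v = 0" by (simp add: poly_pcompose qpoly_poly0[OF BR(1)])
      thus "poly R v = 0" using poly_Xm[of v] BR(3) by simp
    qed
  qed simp
  hence XL: "Xm = pcompose B L" using BR(3) by simp
  define Q where "Q = B"
  have Qq: "is_qpoly q Q" unfolding Q_def by (rule BR(1))
  have LQ: "pcompose L Q = Xm"
  proof -
    have "pcompose (pcompose L Q) L = pcompose L (pcompose Q L)" by (simp add: pcompose_assoc)
    also have "\<dots> = pcompose L Xm" using XL Q_def by simp
    also have "\<dots> = pcompose Xm L" using Xm_central[OF Lq] by simp
    finally have "pcompose (pcompose L Q - Xm) L = 0" by (simp add: pcompose_diff)
    hence "pcompose L Q - Xm = 0" using pcompose_eq_0 degLpos by blast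
    thus ?thesis by simp
  qed
  have Qnz: "Q \<noteq> 0" using XL Xm_nz Q_def by auto
  have "q ^ m = q ^ qdeg q Q * q ^ s"
    using degree_Xm XL degL qpoly_degree[OF Qq Qnz] by (simp add: degree_pcompose Q_def)
  hence "q ^ m = q ^ (qdeg q Q + s)" by (simp add: power_add)
  hence "m = qdeg q Q + s" by (simp add: qpow_inj)
  hence qdQ: "qdeg q Q = m - s" by simp
  have ImQ: "poly Q x \<in> V" for x
  proof -
    have "poly L (poly Q x) = poly Xm x" using LQ by (metis poly_pcompose)
    thus ?thesis using Lroots poly_Xm by simp
  qed
  have spanUNIV: "Fq_span q n g = UNIV"
  proof (rule card_subset_eq)
    show "card (Fq_span q n g) = card (UNIV :: 'a set)" using span_card[OF indep] card mn by simp
  qed simp_all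
  have "gabidulin q n g k \<inter> vpow V n =
       {map (\<lambda>j. poly Q (poly A (g j))) [0..<n] | A.
          is_qpoly q A \<and> (A = 0 \<or> int (qdeg q A) < int k - int (m - s))}"
  proof (intro equalityI subsetI)
    fix w assume w: "w \<in> gabidulin q n g k \<inter> vpow V n"
    then obtain F where F: "w = map (\<lambda>j. poly F (g j)) [0..<n]" "is_qpoly q F" "F = 0 \<or> qdeg q F < k"
      unfolding gabidulin_def by blast
    have FV: "poly F (g j) \<in> V" if "j < n" for j
      using w F(1) that unfolding vpow_def by auto
    have FallV: "poly F x \<in> V" for x
    proof -
      have "x \<in> Fq_span q n g" using spanUNIV by simp
      then obtain c where c: "\<forall>i<n. c i \<in> Fq q" "x = (\<Sum>i<n. c i * g i)" unfolding Fq_span_def by blast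
      have "poly F x = (\<Sum>i<n. poly F (c i * g i))" using c(2) qpoly_sum_arg[OF F(2)] by simp
      also have "\<dots> = (\<Sum>i<n. c i * poly F (g i))"
        using c(1) by (intro sum.cong refl) (simp add: qpoly_Fq_mult[OF F(2)])
      also have "\<dots> \<in> V" by (rule subspace_lincomb[OF sub]) (use c(1) FV in auto)
      finally show ?thesis .
    qed
    have LF0: "poly (pcompose L F) x = 0" for x using FallV Lroots by (simp add: poly_pcompose)
    have LFq: "is_qpoly q (pcompose L F)" by (rule is_qpoly_pcompose[OF Lq F(2)])
    obtain B2 R2 where BR2: "is_qpoly q B2" "is_qpoly q R2" "pcompose L F = pcompose B2 Xm + R2"
        "R2 = 0 \<or> degree R2 < degree Xm"
      using qpoly_rdiv[OF LFq is_qpoly_Xm Xm_nz] by blast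
    have "R2 = 0"
    proof (cases "R2 = 0")
      case False
      hence dR: "degree R2 < card (UNIV :: 'a set)" using BR2(4) degree_Xm card by simp
      show ?thesis
      proof (rule poly_many_roots_zero[OF dR])
        fix v :: 'a
        have "poly (pcompose B2 Xm) v = 0" by (simp add: poly_pcompose poly_Xm qpoly_poly0[OF BR2(1)])
        thus "poly R2 v = 0" using LF0[of v] BR2(3) by simp
      qed
    qed simp
    hence "pcompose L F = pcompose B2 Xm" using BR2(3) by simp
    also have "\<dots> = pcompose Xm B2" using Xm_central[OF BR2(1)] by simp
    also have "\<dots> = pcompose L (pcompose Q B2)" using LQ by (simp add: pcompose_assoc)
    finally have "pcompose L F - pcompose L (pcompose Q B2) = 0" by simp
    hence "pcompose L (F - pcompose Q B2) = 0" by (simp add: pcompose_diff_right[OF Lq])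
    hence "F - pcompose Q B2 = 0"
      using qpoly_left_zero[OF Lq Lnz is_qpoly_diff[OF F(2) is_qpoly_pcompose[OF Qq BR2(1)]]] by simp
    hence FQB: "F = pcompose Q B2" by simp
    have cond: "B2 = 0 \<or> int (qdeg q B2) < int k - int (m - s)"
    proof (cases "B2 = 0")
      case False
      have "pcompose Q B2 \<noteq> 0" "qdeg q (pcompose Q B2) = qdeg q Q + qdeg q B2"
        using qdeg_pcompose[OF Qq Qnz BR2(1) False] by auto
      hence "F \<noteq> 0" "qdeg q F = (m - s) + qdeg q B2" using FQB qdQ by auto
      hence "(m - s) + qdeg q B2 < k" using F(3) by simp
      thus ?thesis by linarith
    qed simp
    have "w = map (\<lambda>j. poly Q (poly B2 (g j))) [0..<n]" using F(1) FQB by (simp add: poly_pcompose)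
    thus "w \<in> {map (\<lambda>j. poly Q (poly A (g j))) [0..<n] | A.
          is_qpoly q A \<and> (A = 0 \<or> int (qdeg q A) < int k - int (m - s))}"
      using BR2(1) cond by blast
  next
    fix w assume "w \<in> {map (\<lambda>j. poly Q (poly A (g j))) [0..<n] | A.
          is_qpoly q A \<and> (A = 0 \<or> int (qdeg q A) < int k - int (m - s))}"
    then obtain A where A: "w = map (\<lambda>j. poly Q (poly A (g j))) [0..<n]" "is_qpoly q A"
      "A = 0 \<or> int (qdeg q A) < int k - int (m - s)" by blast
    define F where "F = pcompose Q A"
    have Fq: "is_qpoly q F" unfolding F_def by (rule is_qpoly_pcompose[OF Qq A(2)])
    have Fc: "F = 0 \<or> qdeg q F < k"
    proof (cases "A = 0")
      case True
      thus ?thesis unfolding F_def by (simp add: pcompose_0' qpoly_coeff0[OF Qq])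
    next
      case False
      hence "qdeg q F = qdeg q Q + qdeg q A" unfolding F_def using qdeg_pcompose[OF Qq Qnz A(2)] by simp
      thus ?thesis using A(3) False qdQ by linarith
    qed
    have wF: "w = map (\<lambda>j. poly F (g j)) [0..<n]" using A(1) by (simp add: F_def poly_pcompose)
    have "w \<in> gabidulin q n g k" unfolding gabidulin_def using wF Fq Fc by blast
    moreover have "w \<in> vpow V n" unfolding vpow_def using wF ImQ by (auto simp: F_def poly_pcompose)
    ultimately show "w \<in> gabidulin q n g k \<inter> vpow V n" by blast
  qed
  thus ?thesis using Qq Qnz qdQ by blast
qed

end
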